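(* Let $(U_n)_{n\in\mathbb N}$ and $(V_n)_{n\in\mathbb N}$ be sequences of real-valued uniformly integrable random variables with $U_n\le V_n$ almost surely for all $n$. Assume $V_n\to V$ in distribution for some random variable $V$. If $\mathbb E[U_n]\to\mathbb E[V]$, then $U_n\to V$ in distribution as $n\to\infty$. *)

theory Defs
  imports "HOL-Probability.Probability"
begin

definition uniformly_integrable :: "'a measure \<Rightarrow> (nat \<Rightarrow> 'a \<Rightarrow> real) \<Rightarrow> bool" where
  "uniformly_integrable M X \<longleftrightarrow>
     (\<forall>n. integrable M (X n)) \<and>
     (\<forall>e>0. \<exists>K. \<forall>n. (\<integral>x. \<bar>X n x\<bar> * indicator {y. K < \<bar>X n y\<bar>} x \<partial>M) \<le> e)"

end

theory Submission
  imports Defs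
begin

lemma fatou_real:
  fixes f :: "nat \<Rightarrow> 'a \<Rightarrow> real" and g :: "'a \<Rightarrow> real"
  assumes meas: "\<And>n. f n \<in> borel_measurable N" "g \<in> borel_measurable N"
   and nn: "\<And>n x. x \<in> space N \<Longrightarrow> 0 \<le> f n x"
   and lim: "\<And>x. x \<in> space N \<Longrightarrow> (\<lambda>n. f n x) \<longlonglongrightarrow> g x"
   and int: "\<And>n. integrable N (f n)"
   and bnd: "\<And>n. integral\<^sup>L N (f n) \<le> C"
  shows "integrable N g \<and> integral\<^sup>L N g \<le> C"
proof -
  have gnn: "0 \<le> g x" if "x \<in> space N" for x
    using lim[OF that] nn[OF that] by (meson LIMSEQ_le_const)
  have C0: "0 \<le> C" using bnd[of 0] integral_nonneg_AE[of "f 0" N] nn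
    by (meson AE_I2 order_trans)
  have "(\<integral>\<^sup>+x. ennreal (g x) \<partial>N) = (\<integral>\<^sup>+x. liminf (\<lambda>n. ennreal (f n x)) \<partial>N)"
    by (intro nn_integral_cong lim_imp_Liminf[symmetric] tendsto_ennrealI lim) auto
  also have "\<dots> \<le> liminf (\<lambda>n. \<integral>\<^sup>+x. ennreal (f n x) \<partial>N)"
    by (intro nn_integral_liminf) (use meas in auto)
  also have "\<dots> \<le> ennreal C"
  proof -
    have e: "(\<integral>\<^sup>+x. ennreal (f n x) \<partial>N) \<le> ennreal C" for n
    proof -
      have "(\<integral>\<^sup>+x. ennreal (f n x) \<partial>N) = ennreal (integral\<^sup>L N (f n))"
        by (intro nn_integral_eq_integral int) (use nn in auto)
      then show ?thesis using bnd[of n] by (simp add: ennreal_leI)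
    qed
    have "liminf (\<lambda>n. \<integral>\<^sup>+x. ennreal (f n x) \<partial>N) \<le> limsup (\<lambda>n. \<integral>\<^sup>+x. ennreal (f n x) \<partial>N)"
      by (intro Liminf_le_Limsup) simp
    also have "\<dots> \<le> ennreal C"
      by (intro Limsup_bounded always_eventually allI e)
    finally show ?thesis .
  qed
  finally have le: "(\<integral>\<^sup>+x. ennreal (g x) \<partial>N) \<le> ennreal C" .
  have ig: "integrable N g"
    using le by (intro integrableI_nonneg meas AE_I2 gnn) (auto simp: top_unique ennreal_less_top intro: le_less_trans)
  have "integral\<^sup>L N g = enn2real (\<integral>\<^sup>+x. ennreal (g x) \<partial>N)"
    by (intro integral_eq_nn_integral meas AE_I2 gnn)
  also have "\<dots> \<le> C" using le C0 by (intro enn2real_leI)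
  finally show ?thesis using ig by simp
qed

lemma abs_int_le:
  fixes f g :: "'a \<Rightarrow> real"
  assumes "integrable M f" "integrable M g" "\<And>x. x \<in> space M \<Longrightarrow> \<bar>f x\<bar> \<le> g x"
  shows "\<bar>\<integral>x. f x \<partial>M\<bar> \<le> (\<integral>x. g x \<partial>M)"
proof -
  have "\<bar>\<integral>x. f x \<partial>M\<bar> \<le> (\<integral>x. \<bar>f x\<bar> \<partial>M)" by (rule integral_abs_bound)
  also have "\<dots> \<le> (\<integral>x. g x \<partial>M)" using assms by (intro integral_mono) auto
  finally show ?thesis .
qed

lemma UI_conv:
  fixes Y :: "nat \<Rightarrow> 'a \<Rightarrow> real" and Z :: "'a \<Rightarrow> real"
  assumes ps: "prob_space N"
   and mY: "\<And>n. Y n \<in> borel_measurable N" and mZ: "Z \<in> borel_measurable N"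
   and lim: "\<And>x. x \<in> space N \<Longrightarrow> (\<lambda>n. Y n x) \<longlonglongrightarrow> Z x"
   and iY: "\<And>n. integrable N (Y n)"
   and tail: "\<And>e. e > 0 \<Longrightarrow> \<exists>K. \<forall>n. (\<integral>x. (if K < \<bar>Y n x\<bar> then \<bar>Y n x\<bar> else 0) \<partial>N) \<le> e"
  shows "integrable N Z \<and> (\<lambda>n. \<integral>x. Y n x \<partial>N) \<longlonglongrightarrow> (\<integral>x. Z x \<partial>N)"
proof -
  interpret prob_space N by fact
  have itail: "integrable N (\<lambda>x. if K < \<bar>Y n x\<bar> then \<bar>Y n x\<bar> else 0)" for K n
    by (rule Bochner_Integration.integrable_bound[OF iY[of n]]) (use mY in auto)
  obtain K1 where K1: "\<And>n. (\<integral>x. (if K1 < \<bar>Y n x\<bar> then \<bar>Y n x\<bar> else 0) \<partial>N) \<le> 1"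
    using tail[of 1] by auto
  have absb: "(\<integral>x. \<bar>Y n x\<bar> \<partial>N) \<le> max K1 0 + 1" for n
  proof -
    have "(\<integral>x. \<bar>Y n x\<bar> \<partial>N) \<le> (\<integral>x. max K1 0 + (if K1 < \<bar>Y n x\<bar> then \<bar>Y n x\<bar> else 0) \<partial>N)"
      by (rule integral_mono[OF integrable_abs[OF iY] Bochner_Integration.integrable_add[OF integrable_const itail]]) auto
    also have "\<dots> = max K1 0 + (\<integral>x. (if K1 < \<bar>Y n x\<bar> then \<bar>Y n x\<bar> else 0) \<partial>N)"
      by (subst Bochner_Integration.integral_add) (auto intro: itail simp: prob_space)
    finally show ?thesis using K1[of n] by linarith
  qed
  have "integrable N (\<lambda>x. \<bar>Z x\<bar>)"
  proof -
    have "integrable N (\<lambda>x. \<bar>Z x\<bar>) \<and> (\<integral>x. \<bar>Z x\<bar> \<partial>N) \<le> max K1 0 + 1"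
    proof (rule fatou_real[of "\<lambda>n x. \<bar>Y n x\<bar>"])
      show "(\<lambda>n. \<bar>Y n x\<bar>) \<longlonglongrightarrow> \<bar>Z x\<bar>" if "x \<in> space N" for x
        using lim[OF that] by (rule tendsto_rabs)
    qed (use mY mZ absb iY in auto)
    then show ?thesis by simp
  qed
  then have iZ: "integrable N Z" using mZ by (rule integrable_abs_cancel)
  have conv: "(\<lambda>n. \<integral>x. Y n x \<partial>N) \<longlonglongrightarrow> (\<integral>x. Z x \<partial>N)"
  proof (rule LIMSEQ_I)
    fix r :: real assume r: "0 < r"
    obtain K where K: "\<And>n. (\<integral>x. (if K < \<bar>Y n x\<bar> then \<bar>Y n x\<bar> else 0) \<partial>N) \<le> r/4"
      using tail[of "r/4"] r by auto
    define K' where "K' = max K 0"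
    have K'0: "0 \<le> K'" by (simp add: K'_def)
    define g where "g = (\<lambda>x::real. max (- K') (min K' x))"
    have gb: "\<bar>g x\<bar> \<le> \<bar>x\<bar>" "\<bar>g x\<bar> \<le> K'" for x using K'0 by (auto simp: g_def)
    have gd: "\<bar>x - g x\<bar> = max (\<bar>x\<bar> - K') 0" for x using K'0 by (auto simp: g_def)
    have gt: "max (\<bar>x\<bar> - K') 0 \<le> (if K < \<bar>x\<bar> then \<bar>x\<bar> else 0)" for x
      by (auto simp: K'_def)
    have gm[measurable]: "g \<in> borel_measurable borel" unfolding g_def by measurable
    have igY: "integrable N (\<lambda>x. g (Y n x))" for n
      by (rule Bochner_Integration.integrable_bound[OF iY[of n]]) (use mY gb in auto)
    have igZ: "integrable N (\<lambda>x. g (Z x))"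
      by (rule Bochner_Integration.integrable_bound[OF iZ]) (use mZ gb in auto)
    have h1: "\<bar>(\<integral>x. Y n x \<partial>N) - (\<integral>x. g (Y n x) \<partial>N)\<bar> \<le> r/4" for n
    proof -
      have "\<bar>(\<integral>x. Y n x \<partial>N) - (\<integral>x. g (Y n x) \<partial>N)\<bar> = \<bar>\<integral>x. Y n x - g (Y n x) \<partial>N\<bar>"
        using iY igY by simp
      also have "\<dots> \<le> (\<integral>x. (if K < \<bar>Y n x\<bar> then \<bar>Y n x\<bar> else 0) \<partial>N)"
        by (intro abs_int_le Bochner_Integration.integrable_diff iY igY itail) (use gd gt in auto)
      finally show ?thesis using K[of n] by linarith
    qed
    have f2: "integrable N (\<lambda>x. max (\<bar>Z x\<bar> - K') 0) \<and> (\<integral>x. max (\<bar>Z x\<bar> - K') 0 \<partial>N) \<le> r/4"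
    proof (rule fatou_real[of "\<lambda>n x. max (\<bar>Y n x\<bar> - K') 0"])
      show "(\<integral>x. max (\<bar>Y n x\<bar> - K') 0 \<partial>N) \<le> r/4" for n
      proof -
        have "(\<integral>x. max (\<bar>Y n x\<bar> - K') 0 \<partial>N) \<le> (\<integral>x. (if K < \<bar>Y n x\<bar> then \<bar>Y n x\<bar> else 0) \<partial>N)"
          by (rule integral_mono[OF Bochner_Integration.integrable_bound[OF itail[of K n]] itail]) (use mY gt in auto)
        then show ?thesis using K[of n] by linarith
      qed
      show "integrable N (\<lambda>x. max (\<bar>Y n x\<bar> - K') 0)" for n
        by (rule Bochner_Integration.integrable_bound[OF itail[of K n]]) (use mY gt in auto)
    qed (use mY mZ lim in \<open>auto intro!: tendsto_intros\<close>)
    have h2: "\<bar>(\<integral>x. Z x \<partial>N) - (\<integral>x. g (Z x) \<partial>N)\<bar> \<le> r/4"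
    proof -
      have "\<bar>(\<integral>x. Z x \<partial>N) - (\<integral>x. g (Z x) \<partial>N)\<bar> = \<bar>\<integral>x. Z x - g (Z x) \<partial>N\<bar>"
        using iZ igZ by simp
      also have "\<dots> \<le> (\<integral>x. max (\<bar>Z x\<bar> - K') 0 \<partial>N)"
        by (intro abs_int_le Bochner_Integration.integrable_diff iZ igZ) (use gd f2 in auto)
      finally show ?thesis using f2 by linarith
    qed
    have h3: "(\<lambda>n. \<integral>x. g (Y n x) \<partial>N) \<longlonglongrightarrow> (\<integral>x. g (Z x) \<partial>N)"
    proof (rule integral_dominated_convergence[where w="\<lambda>_. K'"])
      show "AE x in N. (\<lambda>n. g (Y n x)) \<longlonglongrightarrow> g (Z x)"
        using lim unfolding g_def by (auto intro!: tendsto_intros)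
    qed (use mY mZ gb in auto)
    obtain n0 where n0: "\<And>n. n \<ge> n0 \<Longrightarrow> norm ((\<integral>x. g (Y n x) \<partial>N) - (\<integral>x. g (Z x) \<partial>N)) < r/4"
      using LIMSEQ_D[OF h3, of "r/4"] r by auto
    show "\<exists>no. \<forall>n\<ge>no. norm ((\<integral>x. Y n x \<partial>N) - (\<integral>x. Z x \<partial>N)) < r"
    proof (intro exI allI impI)
      fix n assume "n \<ge> n0"
      from n0[OF this] h1[of n] h2 r show "norm ((\<integral>x. Y n x \<partial>N) - (\<integral>x. Z x \<partial>N)) < r"
        unfolding real_norm_def by linarith
    qed
  qed
  show ?thesis using iZ conv by simp
qed

lemma cts_step_lip:
  assumes "x < y" "a \<le> b"
  shows "\<bar>cts_step x y a - cts_step x y b\<bar> \<le> (b - a) / (y - x)"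
proof -
  have alt: "cts_step x y t = max 0 (min 1 ((y - t) / (y - x)))" for t
    using assms(1) unfolding cts_step_def by (auto simp: divide_simps)
  have cl: "\<bar>max 0 (min 1 p) - max 0 (min 1 q)\<bar> \<le> \<bar>p - q\<bar>" for p q :: real
    by (auto simp: max_def min_def)
  have "(y - a) / (y - x) - (y - b) / (y - x) = (b - a) / (y - x)"
    by (simp add: diff_divide_distrib[symmetric])
  moreover have "(b - a) / (y - x) \<ge> 0" using assms by simp
  ultimately have e: "\<bar>(y - a) / (y - x) - (y - b) / (y - x)\<bar> = (b - a) / (y - x)" by (metis abs_of_nonneg)
  show ?thesis unfolding alt using cl[of "(y - a) / (y - x)" "(y - b) / (y - x)"] e by linarith
qed

lemma cts_step_meas[measurable]: "cts_step x y \<in> borel_measurable borel"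
  unfolding cts_step_def[abs_def] by measurable

theorem lemma3p5:
  fixes M :: "'a measure"
    and U V' :: "nat \<Rightarrow> 'a \<Rightarrow> real"
    and V :: "'a \<Rightarrow> real"
  assumes "prob_space M"
    and "\<And>n. U n \<in> borel_measurable M"
    and "\<And>n. V' n \<in> borel_measurable M"
    and "V \<in> borel_measurable M"
    and "uniformly_integrable M U"
    and "uniformly_integrable M V'"
    and "\<And>n. AE x in M. U n x \<le> V' n x"
    and "weak_conv_m (\<lambda>n. distr M borel (V' n)) (distr M borel V)"
    and "(\<lambda>n. \<integral>x. U n x \<partial>M) \<longlonglongrightarrow> (\<integral>x. V x \<partial>M)"
  shows "weak_conv_m (\<lambda>n. distr M borel (U n)) (distr M borel V)"
proof -
  interpret prob_space M by fact
  note mU[measurable] = assms(2) and mV'[measurable] = assms(3) and mV[measurable] = assms(4)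
  have rdV': "real_distribution (distr M borel (V' n))" for n by simp
  have rdU: "real_distribution (distr M borel (U n))" for n by simp
  have rdV: "real_distribution (distr M borel V)" by simp
  have iU: "integrable M (U n)" for n using assms(5) unfolding uniformly_integrable_def by auto
  have iV': "integrable M (V' n)" for n using assms(6) unfolding uniformly_integrable_def by auto
  obtain \<Omega> :: "real measure" and Ys Y where
    ps: "prob_space \<Omega>" and mYs[measurable]: "\<And>n. Ys n \<in> borel_measurable \<Omega>"
    and dYs: "\<And>n. distr \<Omega> borel (Ys n) = distr M borel (V' n)"
    and mY0: "Y \<in> measurable \<Omega> lborel" and dY: "distr \<Omega> borel Y = distr M borel V"
    and lim: "\<And>x. x \<in> space \<Omega> \<Longrightarrow> (\<lambda>n. Ys n x) \<longlonglongrightarrow> Y x"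
    using Skorohod[OF rdV' rdV assms(8)] by blast
  have mY[measurable]: "Y \<in> borel_measurable \<Omega>" using mY0 by simp
  have tr: "(\<integral>x. f (Ys n x) \<partial>\<Omega>) = (\<integral>x. f (V' n x) \<partial>M)" if [measurable]: "f \<in> borel_measurable borel" for f :: "real \<Rightarrow> real" and n
  proof -
    have "(\<integral>x. f (Ys n x) \<partial>\<Omega>) = integral\<^sup>L (distr \<Omega> borel (Ys n)) f"
      by (rule integral_distr[of "Ys n" \<Omega> borel f, symmetric]) auto
    also have "\<dots> = integral\<^sup>L (distr M borel (V' n)) f" by (simp add: dYs)
    also have "\<dots> = (\<integral>x. f (V' n x) \<partial>M)" by (rule integral_distr[of "V' n" M borel f]) auto
    finally show ?thesis .
  qed
  have trY: "(\<integral>x. Y x \<partial>\<Omega>) = (\<integral>x. V x \<partial>M)"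
  proof -
    have "(\<integral>x. Y x \<partial>\<Omega>) = integral\<^sup>L (distr \<Omega> borel Y) (\<lambda>x. x)"
      by (rule integral_distr[of Y \<Omega> borel "\<lambda>x. x", symmetric]) auto
    also have "\<dots> = integral\<^sup>L (distr M borel V) (\<lambda>x. x)" by (simp add: dY)
    also have "\<dots> = (\<integral>x. V x \<partial>M)" by (rule integral_distr[of V M borel "\<lambda>x. x"]) auto
    finally show ?thesis .
  qed
  have iYs: "integrable \<Omega> (Ys n)" for n
  proof -
    have "integrable (distr M borel (V' n)) (\<lambda>x. x)"
      using iV'[of n] by (subst integrable_distr_eq) auto
    then have "integrable (distr \<Omega> borel (Ys n)) (\<lambda>x. x)" by (simp add: dYs)
    then show ?thesis by (subst (asm) integrable_distr_eq) auto
  qed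
  have EV: "(\<lambda>n. \<integral>x. V' n x \<partial>M) \<longlonglongrightarrow> (\<integral>x. V x \<partial>M)"
  proof -
    have "integrable \<Omega> Y \<and> (\<lambda>n. \<integral>x. Ys n x \<partial>\<Omega>) \<longlonglongrightarrow> (\<integral>x. Y x \<partial>\<Omega>)"
    proof (rule UI_conv[OF ps mYs mY lim iYs])
      fix e :: real assume "e > 0"
      then obtain K where K: "\<And>n. (\<integral>x. \<bar>V' n x\<bar> * indicator {y. K < \<bar>V' n y\<bar>} x \<partial>M) \<le> e"
        using assms(6) unfolding uniformly_integrable_def by blast
      show "\<exists>K. \<forall>n. (\<integral>x. (if K < \<bar>Ys n x\<bar> then \<bar>Ys n x\<bar> else 0) \<partial>\<Omega>) \<le> e"
      proof (intro exI allI)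
        fix n
        have "(\<integral>x. (if K < \<bar>Ys n x\<bar> then \<bar>Ys n x\<bar> else 0) \<partial>\<Omega>)
            = (\<integral>x. (if K < \<bar>V' n x\<bar> then \<bar>V' n x\<bar> else 0) \<partial>M)"
          by (rule tr[of "\<lambda>z. if K < \<bar>z\<bar> then \<bar>z\<bar> else 0" n]) measurable
        also have "\<dots> = (\<integral>x. \<bar>V' n x\<bar> * indicator {y. K < \<bar>V' n y\<bar>} x \<partial>M)"
          by (intro Bochner_Integration.integral_cong) (auto simp: indicator_def)
        finally show "(\<integral>x. (if K < \<bar>Ys n x\<bar> then \<bar>Ys n x\<bar> else 0) \<partial>\<Omega>) \<le> e" using K[of n] by simp
      qed
    qed
    then have "(\<lambda>n. \<integral>x. Ys n x \<partial>\<Omega>) \<longlonglongrightarrow> (\<integral>x. V x \<partial>M)" using trY by simp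
    moreover have "(\<integral>x. Ys n x \<partial>\<Omega>) = (\<integral>x. V' n x \<partial>M)" for n
      using tr[of "\<lambda>z. z" n] by simp
    ultimately show ?thesis by simp
  qed
  have D: "(\<lambda>n. \<integral>x. V' n x - U n x \<partial>M) \<longlonglongrightarrow> 0"
  proof -
    have "(\<lambda>n. (\<integral>x. V' n x \<partial>M) - (\<integral>x. U n x \<partial>M)) \<longlonglongrightarrow> (\<integral>x. V x \<partial>M) - (\<integral>x. V x \<partial>M)"
      by (intro tendsto_diff EV assms(9))
    then show ?thesis using iU iV' by simp
  qed
  show ?thesis
  proof (rule integral_cts_step_conv_imp_weak_conv[OF rdU rdV])
    fix x y :: real assume xy: "x < y"
    define h where "h = cts_step x y"
    have mh[measurable]: "h \<in> borel_measurable borel" unfolding h_def by simp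
    have hb: "\<bar>h z\<bar> \<le> 1" for z unfolding h_def cts_step_def using xy
      by (auto simp: field_simps)
    have ih: "integrable M (\<lambda>z. h (f z))" if [measurable]: "f \<in> borel_measurable M" for f
      by (rule integrable_const_bound[where B=1]) (use hb in auto)
    have cont: "isCont h z" for z
    proof -
      have "continuous_on UNIV h" unfolding h_def
        by (rule uniformly_continuous_imp_continuous[OF cts_step_uniformly_continuous[OF xy]])
      then show ?thesis by (simp add: continuous_on_eq_continuous_at)
    qed
    have c1: "(\<lambda>n. integral\<^sup>L (distr M borel (V' n)) h) \<longlonglongrightarrow> integral\<^sup>L (distr M borel V) h"
      by (rule weak_conv_imp_integral_bdd_continuous_conv[OF rdV' rdV assms(8), where B=1])
         (use cont hb in auto)
    have D': "(\<lambda>n. (\<integral>x. V' n x - U n x \<partial>M) / (y - x)) \<longlonglongrightarrow> 0"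
      using tendsto_divide[OF D tendsto_const, of "y - x"] xy by simp
    have c2: "(\<lambda>n. integral\<^sup>L (distr M borel (U n)) h - integral\<^sup>L (distr M borel (V' n)) h) \<longlonglongrightarrow> 0"
    proof (rule Lim_null_comparison[OF _ D'])
      show "\<forall>\<^sub>F n in sequentially. norm (integral\<^sup>L (distr M borel (U n)) h - integral\<^sup>L (distr M borel (V' n)) h)
              \<le> (\<integral>x. V' n x - U n x \<partial>M) / (y - x)"
      proof (intro always_eventually allI)
        fix n
        have "integral\<^sup>L (distr M borel (U n)) h - integral\<^sup>L (distr M borel (V' n)) h
            = (\<integral>z. h (U n z) - h (V' n z) \<partial>M)"
          by (simp add: integral_distr ih)
        moreover have "\<bar>\<integral>z. h (U n z) - h (V' n z) \<partial>M\<bar> \<le> (\<integral>z. (V' n z - U n z) / (y - x) \<partial>M)"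
        proof -
          have "\<bar>\<integral>z. h (U n z) - h (V' n z) \<partial>M\<bar> \<le> (\<integral>z. \<bar>h (U n z) - h (V' n z)\<bar> \<partial>M)"
            by (rule integral_abs_bound)
          also have "\<dots> \<le> (\<integral>z. (V' n z - U n z) / (y - x) \<partial>M)"
            using assms(7)[of n] iU iV' ih
            by (intro integral_mono_AE) (auto simp: h_def intro!: cts_step_lip xy)
          finally show ?thesis .
        qed
        ultimately show "norm (integral\<^sup>L (distr M borel (U n)) h - integral\<^sup>L (distr M borel (V' n)) h)
              \<le> (\<integral>x. V' n x - U n x \<partial>M) / (y - x)" by simp
      qed
    qed
    have "(\<lambda>n. integral\<^sup>L (distr M borel (V' n)) h + (integral\<^sup>L (distr M borel (U n)) h - integral\<^sup>L (distr M borel (V' n)) h))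
       \<longlonglongrightarrow> integral\<^sup>L (distr M borel V) h + 0"
      by (intro tendsto_add c1 c2)
    then show "(\<lambda>n. integral\<^sup>L (distr M borel (U n)) (cts_step x y)) \<longlonglongrightarrow> integral\<^sup>L (distr M borel V) (cts_step x y)"
      by (simp add: h_def)
  qed
qed

end
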